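(* Let $(\mathcal{G},\alpha)$ be an abstract GKM graph and $p\neq q$ vertices. Set $P=\prod_{e\in\mathcal{E}_p\setminus\mathcal{E}_{pq}}\alpha(e)$, $Q=\prod_{e\in\mathcal{E}_q\setminus\mathcal{E}_{qp}}\alpha(e)$, for $e\in\mathcal{E}_{pq}$ let $c(e)=|\{e'\in\mathcal{E}_{pq}: e'\neq e,\ \alpha(\overline{e'})=-\alpha(e')\}|$, and let $E=\{e\in\mathcal{E}_{pq}: c(e)\text{ even}\}$, $O=\{e\in\mathcal{E}_{pq}: c(e)\text{ odd}\}$. Then $P-Q$ is divisible by $\prod_{e\in E}\alpha(e)$ and $P+Q$ is divisible by $\prod_{e\in O}\alpha(e)$ in $H^*(BT)$.
   Context: $H^*(BT)=\mathbb{Z}[x_1,\dots,x_r]$ with $\deg x_i=2$. Let $\mathcal{G}$ be a finite $n$-valent undirected graph (multiple edges allowed, no loops) with vertex set $\mathcal{V}$ and set of directed edges $\mathcal{E}$; for $e\in\mathcal{E}$, $\overline e$ is the reversed edge, $i(e),t(e)$ its initial and terminal vertices, $\mathcal{E}_p=\{e: i(e)=p\}$, $\mathcal{E}_{pq}=\{e: i(e)=p,\ t(e)=q\}$. An axial function $\alpha:\mathcal{E}\to H^2(BT)$ satisfies: $\alpha(\overline e)=\pm\alpha(e)$; $\alpha(e),\alpha(e')$ linearly independent over $\mathbb{Z}$ if $e\ne e'$, $i(e)=i(e')$; coefficients of each $\alpha(e)$ have gcd $1$. An abstract GKM graph is such $(\mathcal{G},\alpha)$ admitting a parallel transport, i.e.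 bijections $\mathcal{P}_e:\mathcal{E}_{i(e)}\to\mathcal{E}_{t(e)}$ with $\mathcal{P}_{\overline e}=\mathcal{P}_e^{-1}$, $\mathcal{P}_e(e)=\overline e$, $\alpha(\mathcal{P}_e(e'))-\alpha(e')\in\mathbb{Z}\alpha(e)$ for all $e'\in\mathcal{E}_{i(e)}$. *)

theory Defs
  imports Main "HOL-Library.Poly_Mapping"
begin

text \<open>H^*(BT) = Z[x_1..x_r], variables indexed by a finite type 'x (r = CARD('x)),
  polynomials as finitely supported maps from monomials (exponent vectors) to int.\<close>
type_synonym 'x HBT = "('x \<Rightarrow>\<^sub>0 nat) \<Rightarrow>\<^sub>0 int"

text \<open>An element of H^2(BT) is given by its integer coefficient vector; lin turns it
  into the corresponding degree-2 (linear) polynomial.\<close>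
definition lin :: "('x::finite \<Rightarrow> int) \<Rightarrow> 'x HBT" where
  "lin a = (\<Sum>x\<in>UNIV. Poly_Mapping.single (Poly_Mapping.single x 1) (a x))"

definition out_edges :: "'e set \<Rightarrow> ('e \<Rightarrow> 'v) \<Rightarrow> 'v \<Rightarrow> 'e set" where
  "out_edges E i p = {e \<in> E. i e = p}"

definition edges_between :: "'e set \<Rightarrow> ('e \<Rightarrow> 'v) \<Rightarrow> ('e \<Rightarrow> 'v) \<Rightarrow> 'v \<Rightarrow> 'v \<Rightarrow> 'e set" where
  "edges_between E i t p q = {e \<in> E. i e = p \<and> t e = q}"

text \<open>Finite n-valent undirected graph (multiple edges allowed, no loops), given by its
  vertex set V, set of directed edges E, initial/terminal vertex maps i, t and edge reversal rv.\<close>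
definition nvalent_graph ::
  "'v set \<Rightarrow> 'e set \<Rightarrow> ('e \<Rightarrow> 'v) \<Rightarrow> ('e \<Rightarrow> 'v) \<Rightarrow> ('e \<Rightarrow> 'e) \<Rightarrow> nat \<Rightarrow> bool" where
  "nvalent_graph V E i t rv n \<longleftrightarrow>
     finite V \<and> finite E \<and>
     (\<forall>e\<in>E. i e \<in> V \<and> t e \<in> V \<and> i e \<noteq> t e) \<and>
     (\<forall>e\<in>E. rv e \<in> E \<and> rv e \<noteq> e \<and> rv (rv e) = e \<and> i (rv e) = t e \<and> t (rv e) = i e) \<and>
     (\<forall>p\<in>V. card (out_edges E i p) = n)"

definition axial_function ::
  "'e set \<Rightarrow> ('e \<Rightarrow> 'v) \<Rightarrow> ('e \<Rightarrow> 'e) \<Rightarrow> ('e \<Rightarrow> ('x \<Rightarrow> int)) \<Rightarrow> bool" where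
  "axial_function E i rv \<alpha> \<longleftrightarrow>
     (\<forall>e\<in>E. \<alpha> (rv e) = \<alpha> e \<or> \<alpha> (rv e) = - \<alpha> e) \<and>
     (\<forall>e\<in>E. \<forall>e'\<in>E. e \<noteq> e' \<and> i e = i e' \<longrightarrow>
         (\<forall>a b :: int. (\<forall>x. a * \<alpha> e x + b * \<alpha> e' x = 0) \<longrightarrow> a = 0 \<and> b = 0)) \<and>
     (\<forall>e\<in>E. Gcd (range (\<alpha> e)) = 1)"

definition parallel_transport ::
  "'e set \<Rightarrow> ('e \<Rightarrow> 'v) \<Rightarrow> ('e \<Rightarrow> 'v) \<Rightarrow> ('e \<Rightarrow> 'e) \<Rightarrow> ('e \<Rightarrow> ('x \<Rightarrow> int))
     \<Rightarrow> ('e \<Rightarrow> 'e \<Rightarrow> 'e) \<Rightarrow> bool" where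
  "parallel_transport E i t rv \<alpha> P \<longleftrightarrow>
     (\<forall>e\<in>E. bij_betw (P e) (out_edges E i (i e)) (out_edges E i (t e)) \<and>
        (\<forall>e'\<in>out_edges E i (i e). P (rv e) (P e e') = e') \<and>
        P e e = rv e \<and>
        (\<forall>e'\<in>out_edges E i (i e). \<exists>k::int. \<alpha> (P e e') - \<alpha> e' = (\<lambda>x. k * \<alpha> e x)))"

definition abstract_gkm_graph ::
  "'v set \<Rightarrow> 'e set \<Rightarrow> ('e \<Rightarrow> 'v) \<Rightarrow> ('e \<Rightarrow> 'v) \<Rightarrow> ('e \<Rightarrow> 'e) \<Rightarrow> nat
     \<Rightarrow> ('e \<Rightarrow> ('x \<Rightarrow> int)) \<Rightarrow> bool" where
  "abstract_gkm_graph V E i t rv n \<alpha> \<longleftrightarrow>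
     nvalent_graph V E i t rv n \<and> axial_function E i rv \<alpha> \<and>
     (\<exists>P. parallel_transport E i t rv \<alpha> P)"

end

theory Submission
  imports Defs "HOL-Computational_Algebra.Primes"
begin


abbreviation ev :: "'x \<Rightarrow> ('x \<Rightarrow>\<^sub>0 nat)" where "ev j \<equiv> Poly_Mapping.single j 1"

lemma lookup_of_int_mult:
  "Poly_Mapping.lookup (of_int k * (F :: 'a::comm_monoid_add \<Rightarrow>\<^sub>0 int)) m = k * Poly_Mapping.lookup F m"
proof -
  have "of_int k * F = Poly_Mapping.map ((*) k) F"
    by (metis mult_map_scale_conv_mult single_of_int of_int_eq_id id_apply)
  then show ?thesis by (simp add: Poly_Mapping.map.rep_eq when_def)
qed

lemma frag_cmul_eq: "frag_cmul k (F :: 'a::comm_monoid_add \<Rightarrow>\<^sub>0 int) = of_int k * F"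
  by (rule poly_mapping_eqI) (simp add: lookup_of_int_mult)

lemma single_eq_cmul: "Poly_Mapping.single m c = frag_cmul c (frag_of m)"
  by (rule poly_mapping_eqI) (simp add: lookup_single)

definition D :: "'x \<Rightarrow> 'x HBT \<Rightarrow> 'x HBT" where
  "D j F = frag_extend (\<lambda>m. frag_cmul (int (Poly_Mapping.lookup m j)) (frag_of (m - ev j))) F"

lemma D_diff: "D j (A - B) = D j A - D j B" by (simp add: D_def frag_extend_diff)
lemma D_add: "D j (A + B) = D j A + D j B" by (simp add: D_def frag_extend_add)
lemma D_zero[simp]: "D j 0 = 0" by (simp add: D_def)
lemma D_frag_of: "D j (frag_of m) = of_int (int (Poly_Mapping.lookup m j)) * frag_of (m - ev j)"
  by (simp add: D_def frag_cmul_eq)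

lemma minus_ev_add:
  assumes "Poly_Mapping.lookup m j > 0"
  shows "m - ev j + m' = m + m' - ev j"
  using assms by (intro poly_mapping_eqI) (auto simp add: lookup_add lookup_minus lookup_single when_def)

lemma D_mono_mult: "D j (frag_of m * frag_of m') = D j (frag_of m) * frag_of m' + frag_of m * D j (frag_of m')"
proof -
  have l: "frag_of m * frag_of m' = frag_of (m + m')" by (simp add: mult_single)
  have A: "D j (frag_of m) * frag_of m' = of_int (int (Poly_Mapping.lookup m j)) * frag_of (m + m' - ev j)"
  proof (cases "Poly_Mapping.lookup m j > 0")
    case True
    have e: "m - ev j + m' = m + m' - ev j" by (rule minus_ev_add[OF True])
    show ?thesis by (simp only: D_frag_of mult.assoc mult_single e mult_1)
  next
    case False
    then show ?thesis by (simp add: D_frag_of)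
  qed
  have B: "frag_of m * D j (frag_of m') = of_int (int (Poly_Mapping.lookup m' j)) * frag_of (m + m' - ev j)"
  proof (cases "Poly_Mapping.lookup m' j > 0")
    case True
    have e: "m' - ev j + m = m + m' - ev j" using minus_ev_add[OF True, of m] by (simp add: add.commute)
    show ?thesis by (simp only: D_frag_of mult.left_commute[of "frag_of m"] mult_single e mult_1 add.commute[of m])
  next
    case False
    then show ?thesis by (simp add: D_frag_of)
  qed
  show ?thesis unfolding l A B by (simp add: D_frag_of lookup_add distrib_right)
qed

lemma D_leibniz: "D j (F * G) = D j F * G + F * D j G"
proof -
  have "D j (frag_of m * G) = D j (frag_of m) * G + frag_of m * D j G" for m
  proof -
    have "Poly_Mapping.keys G \<subseteq> UNIV" by simp
    then show ?thesis
    proof (induction G rule: frag_induction)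
      case zero then show ?case by simp
    next
      case (one x) show ?case by (rule D_mono_mult)
    next
      case (diff a b) then show ?case by (simp add: right_diff_distrib D_diff algebra_simps)
    qed
  qed
  note eqm = this
  have "Poly_Mapping.keys F \<subseteq> UNIV" by simp
  then show ?thesis
  proof (induction F rule: frag_induction)
    case zero then show ?case by simp
  next
    case (one x) show ?case by (rule eqm)
  next
    case (diff a b) then show ?case by (simp add: left_diff_distrib D_diff algebra_simps)
  qed
qed


lemma of_int_HBT: "(of_int c :: 'x HBT) = frag_cmul c (frag_of 0)"
  by (simp add: frag_cmul_eq)

lemma D_of_int[simp]: "D j (of_int c) = 0"
proof -
  have z: "D j (frag_of 0) = 0" using D_frag_of[of j 0] by simp
  have "D j (of_int c) = frag_cmul c (D j (frag_of 0))"
    unfolding of_int_HBT D_def by (rule frag_extend_cmul)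
  then show ?thesis by (simp only: z frag_cmul_zero2)
qed

lemma D_cmul: "D j (frag_cmul c F) = frag_cmul c (D j F)"
  unfolding D_def by (rule frag_extend_cmul)

lemma D_single_ev: "D j (Poly_Mapping.single (ev x) c) = (if x = j then of_int c else 0)"
proof -
  have "D j (Poly_Mapping.single (ev x) c) = frag_cmul c (D j (frag_of (ev x)))"
    by (subst single_eq_cmul) (rule D_cmul)
  also have "\<dots> = of_int c * (of_int (int (Poly_Mapping.lookup (ev x) j)) * frag_of (ev x - ev j))"
    by (simp only: D_frag_of frag_cmul_eq)
  also have "\<dots> = (if x = j then of_int c else 0)"
    by (simp add: lookup_single)
  finally show ?thesis .
qed

lemma D_sum: "finite I \<Longrightarrow> D j (\<Sum>i\<in>I. f i) = (\<Sum>i\<in>I. D j (f i))"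
  by (induction I rule: finite_induct) (simp_all add: D_add)

lemma D_lin: "D j (lin (b :: 'x::finite \<Rightarrow> int)) = of_int (b j)"
  unfolding lin_def D_sum[OF finite_UNIV] D_single_ev by simp

lemma lin_add: "lin (\<lambda>x. (a::'x::finite \<Rightarrow> int) x + b x) = lin a + lin b"
  by (simp add: lin_def single_add sum.distrib)


lemma lin_uminus: "lin (\<lambda>x. - (a::'x::finite \<Rightarrow> int) x) = - lin a"
  by (simp add: lin_def single_uminus sum_negf)

lemma lin_scale: "lin (\<lambda>x. k * (a::'x::finite \<Rightarrow> int) x) = of_int k * lin a"
proof -
  have "Poly_Mapping.single m (k * c) = of_int k * Poly_Mapping.single m c" for m :: "'x \<Rightarrow>\<^sub>0 nat" and c :: int
    by (rule poly_mapping_eqI) (simp only: lookup_of_int_mult, simp add: lookup_single when_def)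
  then show ?thesis by (simp add: lin_def sum_distrib_left)
qed

definition Dd :: "('x \<Rightarrow> int) \<Rightarrow> 'x \<Rightarrow> 'x \<Rightarrow> 'x HBT \<Rightarrow> 'x HBT" where
  "Dd a j k F = of_int (a k) * D j F - of_int (a j) * D k F"

lemma Dd_leibniz: "Dd a j k (F * G) = Dd a j k F * G + F * Dd a j k G"
  by (simp add: Dd_def D_leibniz algebra_simps)

lemma Dd_diff: "Dd a j k (A - B) = Dd a j k A - Dd a j k B"
  by (simp add: Dd_def D_diff algebra_simps)

lemma Dd_add: "Dd a j k (A + B) = Dd a j k A + Dd a j k B"
  by (simp add: Dd_def D_add algebra_simps)

lemma Dd_of_int_mult: "Dd a j k (of_int c * Z) = of_int c * Dd a j k Z"
  by (simp add: Dd_def D_leibniz algebra_simps)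

lemma Dd_lin: "Dd a j k (lin (b :: 'x::finite \<Rightarrow> int)) = of_int (a k * b j - a j * b k)"
  by (simp add: Dd_def D_lin)

definition deg :: "('x::finite \<Rightarrow>\<^sub>0 nat) \<Rightarrow> nat" where
  "deg m = (\<Sum>x\<in>UNIV. Poly_Mapping.lookup m x)"

lemma deg_add: "deg (m + m') = deg m + deg m'"
  by (simp add: deg_def lookup_add sum.distrib)

lemma deg_ev: "deg (ev (j::'x::finite)) = 1"
  by (simp add: deg_def lookup_single when_def)

lemma deg_minus_ev:
  assumes "Poly_Mapping.lookup m j > 0"
  shows "deg (m - ev (j::'x::finite)) + 1 = deg m"
proof -
  have "m - ev j + ev j = m"
    using assms by (intro poly_mapping_eqI) (auto simp add: lookup_add lookup_minus lookup_single when_def)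
  then show ?thesis by (metis deg_add deg_ev)
qed

lemma keys_D:
  assumes "Poly_Mapping.keys F \<subseteq> {m. deg m < Suc N}"
  shows "Poly_Mapping.keys (D (j::'x::finite) F) \<subseteq> {m. deg m < N}"
proof -
  have "Poly_Mapping.keys (D j F) \<subseteq> (\<Union>m\<in>Poly_Mapping.keys F.
      Poly_Mapping.keys (frag_cmul (int (Poly_Mapping.lookup m j)) (frag_of (m - ev j))))"
    unfolding D_def by (rule keys_frag_extend)
  also have "\<dots> \<subseteq> {m. deg m < N}"
  proof (rule UN_least)
    fix m assume m: "m \<in> Poly_Mapping.keys F"
    show "Poly_Mapping.keys (frag_cmul (int (Poly_Mapping.lookup m j)) (frag_of (m - ev j))) \<subseteq> {m. deg m < N}"
    proof
      fix x assume x: "x \<in> Poly_Mapping.keys (frag_cmul (int (Poly_Mapping.lookup m j)) (frag_of (m - ev j)))"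
      then have "Poly_Mapping.lookup m j > 0" "x = m - ev j" by auto
      with m assms show "x \<in> {m. deg m < N}" using deg_minus_ev[of m j] by auto
    qed
  qed
  finally show ?thesis .
qed

lemma keys_of_int_mult: "Poly_Mapping.keys (of_int c * (F :: 'x HBT)) \<subseteq> Poly_Mapping.keys F"
  by (metis frag_cmul_eq keys_cmul)

lemma keys_Dd:
  assumes "Poly_Mapping.keys F \<subseteq> {m. deg m < Suc N}"
  shows "Poly_Mapping.keys (Dd a (j::'x::finite) k F) \<subseteq> {m. deg m < N}"
  unfolding Dd_def using keys_D[OF assms, of j] keys_D[OF assms, of k]
    keys_of_int_mult[of "a k" "D j F"] keys_of_int_mult[of "a j" "D k F"]
    keys_diff[of "of_int (a k) * D j F" "of_int (a j) * D k F"] by blast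

lemma Dd_nilpotent:
  assumes "Poly_Mapping.keys F \<subseteq> {m. deg m < N}"
  shows "(Dd a (j::'x::finite) k ^^ N) F = 0"
  using assms
proof (induction N arbitrary: F)
  case 0 then show ?case by simp
next
  case (Suc N)
  then show ?case by (simp add: funpow_Suc_right keys_Dd del: funpow.simps)
qed

lemma Dd_nilpotent_ex: "\<exists>N. (Dd a (j::'x::finite) k ^^ N) F = 0"
proof -
  have "finite (deg ` Poly_Mapping.keys F)" by simp
  then obtain N where "\<forall>d\<in>deg ` Poly_Mapping.keys F. d < N"
    by (metis finite_nat_set_iff_bounded)
  then have "Poly_Mapping.keys F \<subseteq> {m. deg m < N}" by auto
  then show ?thesis using Dd_nilpotent by blast
qed



lemma ev_add_iff:
  "(\<mu> = ev i + m) \<longleftrightarrow> (Poly_Mapping.lookup \<mu> i > 0 \<and> \<mu> - ev i = m)"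
proof
  assume h: "\<mu> = ev i + m"
  show "Poly_Mapping.lookup \<mu> i > 0 \<and> \<mu> - ev i = m"
    unfolding h by (auto simp: lookup_add intro!: poly_mapping_eqI simp: lookup_minus lookup_single when_def)
next
  assume h: "Poly_Mapping.lookup \<mu> i > 0 \<and> \<mu> - ev i = m"
  have "\<mu> - ev i + ev i = \<mu>"
    using h by (intro poly_mapping_eqI) (auto simp add: lookup_add lookup_minus lookup_single when_def)
  then show "\<mu> = ev i + m" using h by (simp add: add.commute)
qed

lemma lookup_single_mult:
  fixes W :: "'x HBT"
  shows "Poly_Mapping.lookup (Poly_Mapping.single (ev i) c * W) \<mu> =
     (if Poly_Mapping.lookup \<mu> i > 0 then c * Poly_Mapping.lookup W (\<mu> - ev i) else 0)"
proof -
  have "Poly_Mapping.keys W \<subseteq> UNIV" by simp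
  then show ?thesis
  proof (induction W rule: frag_induction)
    case zero then show ?case by simp
  next
    case (one m)
    have "Poly_Mapping.single (ev i) c * frag_of m = Poly_Mapping.single (ev i + m) c"
      by (simp add: mult_single)
    then show ?case using ev_add_iff[of \<mu> i m]
      by (auto simp: lookup_single when_def)
  next
    case (diff a b)
    then show ?case by (simp add: right_diff_distrib lookup_minus)
  qed
qed

lemma lookup_lin_mult:
  "Poly_Mapping.lookup (lin (a::'x::finite \<Rightarrow> int) * W) \<mu> =
     (\<Sum>x\<in>UNIV. if Poly_Mapping.lookup \<mu> x > 0 then a x * Poly_Mapping.lookup W (\<mu> - ev x) else 0)"
  unfolding lin_def sum_distrib_right lookup_sum lookup_single_mult ..

lemma prime_divides_coeffs:
  fixes a :: "'x::finite \<Rightarrow> int" and p :: int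
  assumes g: "Gcd (range a) = 1" and pp: "prime p" and pn: "p dvd n"
    and eq: "of_int n * Z = lin a * W"
  shows "p dvd Poly_Mapping.lookup W \<mu>"
proof (rule ccontr)
  assume nd: "\<not> p dvd Poly_Mapping.lookup W \<mu>"
  obtain j where j: "\<not> p dvd a j"
  proof -
    have "\<not> (\<forall>x. p dvd a x)"
    proof
      assume "\<forall>x. p dvd a x"
      then have "p dvd Gcd (range a)" by (intro Gcd_greatest) auto
      then have "p dvd 1" using g by simp
      then show False using pp by (simp add: not_prime_unit)
    qed
    then show ?thesis using that by blast
  qed
  define S where "S = {m \<in> Poly_Mapping.keys W. \<not> p dvd Poly_Mapping.lookup W m}"
  have finS: "finite S" unfolding S_def by simp
  have "\<mu> \<in> S" using nd unfolding S_def by (auto simp: in_keys_iff)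
  then have Sne: "S \<noteq> {}" by auto
  define M where "M = Max ((\<lambda>m. Poly_Mapping.lookup m j) ` S)"
  have "M \<in> (\<lambda>m. Poly_Mapping.lookup m j) ` S" unfolding M_def using finS Sne by (intro Max_in) auto
  then obtain m where mS: "m \<in> S" and mM: "Poly_Mapping.lookup m j = M" by auto
  have maxp: "p dvd Poly_Mapping.lookup W \<nu>" if "Poly_Mapping.lookup \<nu> j > M" for \<nu>
  proof (rule ccontr)
    assume "\<not> p dvd Poly_Mapping.lookup W \<nu>"
    then have "\<nu> \<in> S" unfolding S_def by (auto simp: in_keys_iff)
    then have "Poly_Mapping.lookup \<nu> j \<le> M" unfolding M_def using finS by (intro Max_ge) auto
    with that show False by simp
  qed
  define \<mu>' where "\<mu>' = m + ev j"
  have lj: "Poly_Mapping.lookup \<mu>' j = M + 1" unfolding \<mu>'_def by (simp add: lookup_add mM)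
  have mj: "\<mu>' - ev j = m" using ev_add_iff[of \<mu>' j m] unfolding \<mu>'_def by (simp add: add.commute)
  define f where "f x = (if Poly_Mapping.lookup \<mu>' x > 0 then a x * Poly_Mapping.lookup W (\<mu>' - ev x) else 0)" for x
  have "Poly_Mapping.lookup (lin a * W) \<mu>' = sum f UNIV"
    unfolding lookup_lin_mult f_def ..
  also have "\<dots> = f j + sum f (UNIV - {j})"
    by (rule sum.remove) auto
  finally have sumeq: "Poly_Mapping.lookup (lin a * W) \<mu>' = a j * Poly_Mapping.lookup W m + sum f (UNIV - {j})"
    using lj mj by (simp add: f_def)
  have "p dvd sum f (UNIV - {j})"
  proof (rule dvd_sum)
    fix x assume "x \<in> UNIV - {j}"
    then have xj: "x \<noteq> j" by simp
    show "p dvd f x"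
    proof (cases "Poly_Mapping.lookup \<mu>' x > 0")
      case True
      have "Poly_Mapping.lookup (\<mu>' - ev x) j = M + 1" using xj lj
        by (simp add: lookup_minus lookup_single when_def)
      then have "p dvd Poly_Mapping.lookup W (\<mu>' - ev x)" by (intro maxp) simp
      then show ?thesis using True by (simp add: f_def)
    qed (simp add: f_def)
  qed
  moreover have "p dvd Poly_Mapping.lookup (lin a * W) \<mu>'"
    using pn unfolding eq[symmetric] lookup_of_int_mult by simp
  ultimately have "p dvd a j * Poly_Mapping.lookup W m"
    using sumeq by (simp add: dvd_add_left_iff)
  with pp j have "p dvd Poly_Mapping.lookup W m" by (simp add: prime_dvd_mult_iff)
  with mS show False unfolding S_def by simp
qed

lemma of_int_mult_cancel:
  assumes "p \<noteq> 0" and "of_int p * (X :: 'x HBT) = of_int p * Y"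
  shows "X = Y"
proof (rule poly_mapping_eqI)
  fix k
  have "p * Poly_Mapping.lookup X k = p * Poly_Mapping.lookup Y k"
    using arg_cong[OF assms(2), of "\<lambda>F. Poly_Mapping.lookup F k"] by (simp add: lookup_of_int_mult)
  with assms(1) show "Poly_Mapping.lookup X k = Poly_Mapping.lookup Y k" by simp
qed

lemma torsion:
  fixes a :: "'x::finite \<Rightarrow> int"
  assumes g: "Gcd (range a) = 1"
  shows "n \<noteq> 0 \<Longrightarrow> lin a dvd of_int n * Z \<Longrightarrow> lin a dvd Z"
proof (induction "nat \<bar>n\<bar>" arbitrary: n rule: less_induct)
  case less
  show ?case
  proof (cases "is_unit n")
    case True
    then have "n * n = 1" using zdvd1_eq[of n] by (auto simp: abs_if split: if_splits)
    then have "Z = of_int n * (of_int n * Z)" by (simp add: mult.assoc[symmetric] of_int_mult[symmetric])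
    with less.prems show ?thesis by (metis dvd_mult)
  next
    case False
    then obtain p where pn: "p dvd n" and pp: "prime p" using prime_divisor_exists less.prems(1) by blast
    from less.prems(2) obtain W where eq: "of_int n * Z = lin a * W" by (auto elim: dvdE)
    have pd: "p dvd Poly_Mapping.lookup W \<mu>" for \<mu>
      using prime_divides_coeffs[OF g pp pn eq] .
    define W' where "W' = Poly_Mapping.map (\<lambda>v. v div p) W"
    have W: "W = of_int p * W'"
    proof (rule poly_mapping_eqI)
      fix k show "Poly_Mapping.lookup W k = Poly_Mapping.lookup (of_int p * W') k"
        using pd[of k] by (simp add: lookup_of_int_mult W'_def Poly_Mapping.map.rep_eq when_def)
    qed
    from pn obtain n' where n': "n = p * n'" by (auto elim: dvdE)
    have p0: "p \<noteq> 0" using pp by auto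
    have "of_int p * (of_int n' * Z) = of_int p * (lin a * W')"
      using eq unfolding W n' by (simp add: algebra_simps)
    then have eq': "of_int n' * Z = lin a * W'" by (rule of_int_mult_cancel[OF p0])
    have n'0: "n' \<noteq> 0" using less.prems(1) n' by auto
    have "\<bar>p\<bar> > 1" using pp prime_int_iff by (auto simp: prime_ge_2_int)
    then have "nat \<bar>n'\<bar> < nat \<bar>n\<bar>" using n' n'0 by (simp add: abs_mult)
    then show ?thesis using less.hyps[OF _ n'0] eq' by auto
  qed
qed



lemma Dd_of_int: "Dd a j k (of_int c) = 0"
  by (simp add: Dd_def)

lemma Dd_iter_lin:
  assumes "Dd a j k (lin b) = of_int c"
  shows "(Dd a j k ^^ Suc m) (lin (b::'x::finite \<Rightarrow> int) * X) =
     lin b * (Dd a j k ^^ Suc m) X + of_int (int (Suc m) * c) * (Dd a j k ^^ m) X"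
proof (induction m)
  case 0 then show ?case by (simp add: Dd_leibniz assms algebra_simps)
next
  case (Suc m)
  have "(Dd a j k ^^ Suc (Suc m)) (lin b * X) = Dd a j k ((Dd a j k ^^ Suc m) (lin b * X))" by simp
  also have "\<dots> = Dd a j k (lin b * (Dd a j k ^^ Suc m) X) + Dd a j k (of_int (int (Suc m) * c) * (Dd a j k ^^ m) X)"
    unfolding Suc Dd_add ..
  also have "\<dots> = (of_int c * (Dd a j k ^^ Suc m) X + lin b * Dd a j k ((Dd a j k ^^ Suc m) X))
      + of_int (int (Suc m) * c) * Dd a j k ((Dd a j k ^^ m) X)"
    by (simp only: Dd_leibniz Dd_of_int assms mult_zero_left add_0_left)
  also have "\<dots> = lin b * (Dd a j k ^^ Suc (Suc m)) X + (of_int c + of_int (int (Suc m) * c)) * (Dd a j k ^^ Suc m) X"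
    by (simp add: algebra_simps)
  also have "\<dots> = lin b * (Dd a j k ^^ Suc (Suc m)) X + of_int (int (Suc (Suc m)) * c) * (Dd a j k ^^ Suc m) X"
    by (simp add: algebra_simps)
  finally show ?case .
qed

lemma Dd_iter_zero:
  assumes "Dd a j k L = 0"
  shows "(Dd a j k ^^ m) (L * Y) = L * (Dd a j k ^^ m) Y"
  by (induction m) (simp_all add: Dd_leibniz assms)

lemma key_prime:
  fixes a b :: "'x::finite \<Rightarrow> int"
  assumes g: "Gcd (range a) = 1"
    and indep: "\<forall>u v::int. (\<forall>x. u * a x + v * b x = 0) \<longrightarrow> u = 0 \<and> v = 0"
    and dv: "lin a dvd lin b * X"
  shows "lin a dvd X"
proof -
  obtain j0 where j0: "a j0 \<noteq> 0"
  proof -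
    have "\<not> (\<forall>x. a x = 0)"
    proof
      assume "\<forall>x. a x = 0"
      then have "range a = {0}" by auto
      with g show False by simp
    qed
    then show ?thesis using that by blast
  qed
  have "\<exists>j k. a k * b j - a j * b k \<noteq> 0"
  proof (rule ccontr)
    assume "\<not> ?thesis"
    then have z: "\<And>j k. a k * b j - a j * b k = 0" by blast
    have "\<forall>x. b j0 * a x + (- a j0) * b x = 0"
    proof
      fix x show "b j0 * a x + (- a j0) * b x = 0" using z[of j0 x] by (simp add: algebra_simps)
    qed
    with indep have "b j0 = 0 \<and> - a j0 = 0" by blast
    with j0 show False by simp
  qed
  then obtain j k where c0: "a k * b j - a j * b k \<noteq> 0" by blast
  define c where "c = a k * b j - a j * b k"
  define d where "d = Dd a j k"
  have dL: "d (lin a) = 0" unfolding d_def Dd_lin by simp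
  have dM: "d (lin b) = of_int c" unfolding d_def Dd_lin c_def ..
  from dv obtain Y where Y: "lin b * X = lin a * Y" by (auto elim: dvdE)
  obtain N where N: "(d ^^ N) X = 0" unfolding d_def using Dd_nilpotent_ex by blast
  have "lin a dvd (d ^^ (N - i)) X" for i
  proof (induction i)
    case 0 then show ?case by (simp add: N)
  next
    case (Suc i)
    show ?case
    proof (cases "i < N")
      case False
      then have "N - Suc i = N - i" by simp
      then show ?thesis using Suc by simp
    next
      case True
      define m where "m = N - Suc i"
      have mi: "Suc m = N - i" unfolding m_def using True by simp
      have e1: "(d ^^ Suc m) (lin b * X) = lin b * (d ^^ Suc m) X + of_int (int (Suc m) * c) * (d ^^ m) X"
        unfolding d_def by (rule Dd_iter_lin[OF dM[unfolded d_def]])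
      have e2: "(d ^^ Suc m) (lin a * Y) = lin a * (d ^^ Suc m) Y"
        unfolding d_def by (rule Dd_iter_zero[OF dL[unfolded d_def]])
      have "lin b * (d ^^ Suc m) X + of_int (int (Suc m) * c) * (d ^^ m) X = (d ^^ Suc m) (lin b * X)"
        by (rule e1[symmetric])
      also have "\<dots> = (d ^^ Suc m) (lin a * Y)" by (simp only: Y)
      also have "\<dots> = lin a * (d ^^ Suc m) Y" by (rule e2)
      finally have eq: "lin b * (d ^^ Suc m) X + of_int (int (Suc m) * c) * (d ^^ m) X = lin a * (d ^^ Suc m) Y" .
      have h1: "lin a dvd lin b * (d ^^ Suc m) X"
      proof -
        have "lin a dvd (d ^^ Suc m) X" using Suc.IH by (simp only: mi)
        then show ?thesis by (rule dvd_mult)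
      qed
      have "lin a dvd lin b * (d ^^ Suc m) X + of_int (int (Suc m) * c) * (d ^^ m) X"
        by (simp only: eq) (rule dvd_triv_left)
      then have h2: "lin a dvd of_int (int (Suc m) * c) * (d ^^ m) X"
        by (simp only: dvd_add_right_iff[OF h1])
      have nz: "int (Suc m) * c \<noteq> 0" using c0 unfolding c_def by simp
      have "lin a dvd (d ^^ m) X" by (rule torsion[OF g nz h2])
      then show ?thesis unfolding m_def .
    qed
  qed
  from this[of N] show ?thesis by simp
qed



definition indep :: "('x \<Rightarrow> int) \<Rightarrow> ('x \<Rightarrow> int) \<Rightarrow> bool" where
  "indep a b \<longleftrightarrow> (\<forall>u v::int. (\<forall>x. u * a x + v * b x = 0) \<longrightarrow> u = 0 \<and> v = 0)"

lemma peel: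
  fixes a :: "'x::finite \<Rightarrow> int"
  assumes fin: "finite S" and g: "Gcd (range a) = 1"
  shows "(\<forall>s\<in>S. indep a (\<beta> s)) \<Longrightarrow> lin a dvd (\<Prod>s\<in>S. lin (\<beta> s)) * X \<Longrightarrow> lin a dvd X"
  using fin
proof (induction S rule: finite_induct)
  case empty then show ?case by simp
next
  case (insert s S)
  have h: "lin a dvd lin (\<beta> s) * ((\<Prod>s\<in>S. lin (\<beta> s)) * X)"
    using insert.prems(2) insert.hyps by (simp add: mult.assoc)
  have i: "indep a (\<beta> s)" using insert.prems(1) by simp
  from i h have h2: "lin a dvd (\<Prod>s\<in>S. lin (\<beta> s)) * X"
    unfolding indep_def by (rule key_prime[OF g])
  have "\<forall>s\<in>S. indep a (\<beta> s)" using insert.prems(1) by simp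
  then show ?case using insert.IH h2 by simp
qed

lemma prod_dvd:
  fixes \<beta> :: "'s \<Rightarrow> 'x::finite \<Rightarrow> int"
  assumes fin: "finite S"
  shows "(\<forall>s\<in>S. Gcd (range (\<beta> s)) = 1) \<Longrightarrow> (\<forall>s\<in>S. \<forall>s'\<in>S. s \<noteq> s' \<longrightarrow> indep (\<beta> s) (\<beta> s'))
    \<Longrightarrow> (\<forall>s\<in>S. lin (\<beta> s) dvd Y) \<Longrightarrow> (\<Prod>s\<in>S. lin (\<beta> s)) dvd Y"
  using fin
proof (induction S rule: finite_induct)
  case empty then show ?case by simp
next
  case (insert s S)
  have "(\<Prod>s\<in>S. lin (\<beta> s)) dvd Y" using insert by blast
  then obtain W where W: "Y = (\<Prod>s\<in>S. lin (\<beta> s)) * W" by (auto elim: dvdE)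
  have g: "Gcd (range (\<beta> s)) = 1" using insert.prems by blast
  have ind: "\<forall>s'\<in>S. indep (\<beta> s) (\<beta> s')"
  proof
    fix s' assume s': "s' \<in> S"
    then have "s \<noteq> s'" using insert.hyps(2) by auto
    then show "indep (\<beta> s) (\<beta> s')" using insert.prems(2) s' by simp
  qed
  have "lin (\<beta> s) dvd (\<Prod>s\<in>S. lin (\<beta> s)) * W" using insert.prems(3) W by simp
  then have "lin (\<beta> s) dvd W" by (rule peel[OF insert.hyps(1) g ind])
  then have "lin (\<beta> s) * (\<Prod>s\<in>S. lin (\<beta> s)) dvd (\<Prod>s\<in>S. lin (\<beta> s)) * W"
    by (simp add: mult.commute mult_dvd_mono)
  then show ?case using insert.hyps W by simp
qed

lemma prod_cong_dvd:
  fixes L :: "'a::comm_ring_1"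
  assumes "finite A"
  shows "(\<forall>x\<in>A. L dvd u x - v x) \<Longrightarrow> L dvd (\<Prod>x\<in>A. u x) - (\<Prod>x\<in>A. v x)"
  using assms
proof (induction A rule: finite_induct)
  case empty then show ?case by simp
next
  case (insert x A)
  have e: "u x * (\<Prod>x\<in>A. u x) - v x * (\<Prod>x\<in>A. v x)
      = (u x - v x) * (\<Prod>x\<in>A. u x) + v x * ((\<Prod>x\<in>A. u x) - (\<Prod>x\<in>A. v x))"
    by (simp add: algebra_simps)
  have "L dvd (u x - v x) * (\<Prod>x\<in>A. u x) + v x * ((\<Prod>x\<in>A. u x) - (\<Prod>x\<in>A. v x))"
    using insert by (intro dvd_add dvd_mult2 dvd_mult) auto
  then show ?case unfolding prod.insert[OF insert.hyps] e .
qed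

lemma prod_sign:
  assumes "finite S"
  shows "(\<Prod>x\<in>S. (if P x then - 1 else 1) * f x) = (- 1) ^ card (S \<inter> {x. P x}) * (\<Prod>x\<in>S. f x :: 'a::comm_ring_1)"
proof -
  have "(\<Prod>x\<in>S. (if P x then - 1 else 1) * f x) = (\<Prod>x\<in>S. (if P x then - 1 else 1 :: 'a)) * (\<Prod>x\<in>S. f x)"
    by (rule prod.distrib)
  also have "(\<Prod>x\<in>S. (if P x then - 1 else 1 :: 'a)) = (- 1) ^ card (S \<inter> {x. P x})"
    using prod.If_cases[OF assms, of P "\<lambda>_. - 1" "\<lambda>_. 1"] by simp
  finally show ?thesis .
qed



lemma lin_uminus_fun: "lin (- (a::'x::finite \<Rightarrow> int)) = - lin a"
  using lin_uminus[of a] by (simp add: fun_Compl_def)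

theorem corollary4p2:
  fixes V :: "'v set" and E :: "'e set" and i t :: "'e \<Rightarrow> 'v" and rv :: "'e \<Rightarrow> 'e"
    and n :: nat and \<alpha> :: "'e \<Rightarrow> ('x::finite \<Rightarrow> int)" and p q :: 'v
  assumes "abstract_gkm_graph V E i t rv n \<alpha>"
    and "p \<in> V" and "q \<in> V" and "p \<noteq> q"
  defines "PP \<equiv> (\<Prod>e\<in>out_edges E i p - edges_between E i t p q. lin (\<alpha> e))"
    and "QQ \<equiv> (\<Prod>e\<in>out_edges E i q - edges_between E i t q p. lin (\<alpha> e))"
    and "c \<equiv> (\<lambda>e. card {e'\<in>edges_between E i t p q. e' \<noteq> e \<and> \<alpha> (rv e') = - \<alpha> e'})"
  shows "(\<Prod>e\<in>{e\<in>edges_between E i t p q. even (c e)}. lin (\<alpha> e)) dvd (PP - QQ)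
       \<and> (\<Prod>e\<in>{e\<in>edges_between E i t p q. odd (c e)}. lin (\<alpha> e)) dvd (PP + QQ)"
proof -
  from assms(1) obtain Pt where Pt: "parallel_transport E i t rv \<alpha> Pt"
    unfolding abstract_gkm_graph_def by blast
  have nv: "nvalent_graph V E i t rv n" and ax: "axial_function E i rv \<alpha>"
    using assms(1) unfolding abstract_gkm_graph_def by blast+
  have finE: "finite E" using nv unfolding nvalent_graph_def by blast
  have rvE: "rv e \<in> E \<and> rv e \<noteq> e \<and> rv (rv e) = e \<and> i (rv e) = t e \<and> t (rv e) = i e" if "e \<in> E" for e
    using nv that unfolding nvalent_graph_def by blast
  have sgn: "\<alpha> (rv e) = \<alpha> e \<or> \<alpha> (rv e) = - \<alpha> e" if "e \<in> E" for e
    using ax that unfolding axial_function_def by blast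
  have ind: "indep (\<alpha> e) (\<alpha> e')" if "e \<in> E" "e' \<in> E" "e \<noteq> e'" "i e = i e'" for e e'
    using ax that unfolding axial_function_def indep_def by blast
  have gcd: "Gcd (range (\<alpha> e)) = 1" if "e \<in> E" for e
    using ax that unfolding axial_function_def by blast
  define Epq where "Epq = edges_between E i t p q"
  define Eqp where "Eqp = edges_between E i t q p"
  have EpqE: "Epq \<subseteq> E" unfolding Epq_def edges_between_def by auto
  have finEpq: "finite Epq" using finE EpqE by (rule finite_subset[rotated])
  have Epq_out: "Epq \<subseteq> out_edges E i p" unfolding Epq_def edges_between_def out_edges_def by auto
  have Eqp_out: "Eqp \<subseteq> out_edges E i q" unfolding Eqp_def edges_between_def out_edges_def by auto
  have Eqp_rv: "Eqp = rv ` Epq"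
  proof
    show "Eqp \<subseteq> rv ` Epq"
    proof
      fix x assume x: "x \<in> Eqp"
      then have "x \<in> E" "i x = q" "t x = p" unfolding Eqp_def edges_between_def by auto
      then have "rv x \<in> Epq" "rv (rv x) = x" using rvE[of x] unfolding Epq_def edges_between_def by auto
      then show "x \<in> rv ` Epq" by (metis image_eqI)
    qed
    show "rv ` Epq \<subseteq> Eqp"
      using rvE unfolding Epq_def Eqp_def edges_between_def by auto
  qed
  have inj_rv: "inj_on rv E" by (rule inj_onI) (metis rvE)
  have PPe: "PP = (\<Prod>e\<in>out_edges E i p - Epq. lin (\<alpha> e))" unfolding PP_def Epq_def ..
  have QQe: "QQ = (\<Prod>e\<in>out_edges E i q - Eqp. lin (\<alpha> e))" unfolding QQ_def Eqp_def ..
  have fin_out: "finite (out_edges E i v)" for v using finE unfolding out_edges_def by simp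
  have lin_rv: "lin (\<alpha> (rv x)) = (if \<alpha> (rv x) = - \<alpha> x then - 1 else 1) * lin (\<alpha> x)" if "x \<in> E" for x
  proof (cases "\<alpha> (rv x) = - \<alpha> x")
    case True
    then have "\<alpha> (rv x) = (\<lambda>y. - \<alpha> x y)" by (simp add: fun_eq_iff)
    then show ?thesis using True by (simp add: lin_uminus)
  next
    case False
    then show ?thesis using sgn[OF that] by simp
  qed
  have main: "lin (\<alpha> e) dvd (- 1) ^ c e * QQ - PP" if eE: "e \<in> Epq" for e
  proof -
    have eE': "e \<in> E" and ie: "i e = p" and te: "t e = q" using eE unfolding Epq_def edges_between_def by auto
    define L where "L = lin (\<alpha> e)"
    define \<pi> where "\<pi> = Pt e"
    have bij: "bij_betw \<pi> (out_edges E i p) (out_edges E i q)" and pie: "\<pi> e = rv e"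
      and cong: "\<forall>e'\<in>out_edges E i p. \<exists>k::int. \<alpha> (\<pi> e') - \<alpha> e' = (\<lambda>x. k * \<alpha> e x)"
      using Pt eE' ie te unfolding parallel_transport_def \<pi>_def by auto
    define A where "A = out_edges E i p - {e}"
    define B where "B = out_edges E i q - {rv e}"
    have e_out: "e \<in> out_edges E i p" using eE Epq_out by auto
    have rve_out: "rv e \<in> out_edges E i q" using rvE[OF eE'] te unfolding out_edges_def by auto
    have bijAB: "bij_betw \<pi> A B" unfolding A_def B_def
      by (rule bij_betw_DiffI[OF bij]) (use pie e_out rve_out in auto)
    have c1: "L dvd (\<Prod>x\<in>A. lin (\<alpha> (\<pi> x))) - (\<Prod>x\<in>A. lin (\<alpha> x))"
    proof (rule prod_cong_dvd)
      show "finite A" unfolding A_def using fin_out by simp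
      show "\<forall>x\<in>A. L dvd lin (\<alpha> (\<pi> x)) - lin (\<alpha> x)"
      proof
        fix x assume "x \<in> A"
        then have "x \<in> out_edges E i p" unfolding A_def by simp
        then obtain k :: int where k: "\<alpha> (\<pi> x) - \<alpha> x = (\<lambda>y. k * \<alpha> e y)" using cong by blast
        have "\<alpha> (\<pi> x) = (\<lambda>y. \<alpha> x y + k * \<alpha> e y)"
        proof
          fix y show "\<alpha> (\<pi> x) y = \<alpha> x y + k * \<alpha> e y"
            using fun_cong[OF k, of y] by simp
        qed
        then have "lin (\<alpha> (\<pi> x)) = lin (\<alpha> x) + of_int k * L"
          unfolding L_def by (simp add: lin_add lin_scale)
        then show "L dvd lin (\<alpha> (\<pi> x)) - lin (\<alpha> x)" by simp
      qed
    qed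
    have c2: "(\<Prod>x\<in>A. lin (\<alpha> (\<pi> x))) = (\<Prod>y\<in>B. lin (\<alpha> y))"
      by (rule prod.reindex_bij_betw[OF bijAB])
    define R where "R = (\<Prod>x\<in>Epq - {e}. lin (\<alpha> x))"
    have splitA: "(\<Prod>x\<in>A. lin (\<alpha> x)) = PP * R"
    proof -
      have "A = (out_edges E i p - Epq) \<union> (Epq - {e})" unfolding A_def using Epq_out eE by auto
      then show ?thesis unfolding PPe R_def
        by (simp only:) (rule prod.union_disjoint, auto simp: fin_out finEpq)
    qed
    define R' where "R' = (\<Prod>x\<in>Eqp - {rv e}. lin (\<alpha> x))"
    have splitB: "(\<Prod>x\<in>B. lin (\<alpha> x)) = QQ * R'"
    proof -
      have "rv e \<in> Eqp" using Eqp_rv eE by auto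
      then have "B = (out_edges E i q - Eqp) \<union> (Eqp - {rv e})" unfolding B_def using Eqp_out by auto
      moreover have "finite Eqp" using Eqp_rv finEpq by simp
      ultimately show ?thesis unfolding QQe R'_def
        by (simp only:) (rule prod.union_disjoint, auto simp: fin_out)
    qed
    have R'eq: "R' = (\<Prod>x\<in>Epq - {e}. lin (\<alpha> (rv x)))"
    proof -
      have inj: "inj_on rv (Epq - {e})" using inj_rv by (rule inj_on_subset) (use EpqE in auto)
      have "rv ` (Epq - {e}) = Eqp - {rv e}"
        unfolding Eqp_rv using inj_rv EpqE eE by (auto simp: inj_on_def)
      then show ?thesis unfolding R'_def using prod.reindex[OF inj, of "\<lambda>x. lin (\<alpha> x)"] by simp
    qed
    have cset: "(Epq - {e}) \<inter> {x. \<alpha> (rv x) = - \<alpha> x} = {e'\<in>edges_between E i t p q. e' \<noteq> e \<and> \<alpha> (rv e') = - \<alpha> e'}"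
      unfolding Epq_def by auto
    have R'sign: "R' = (- 1) ^ c e * R"
    proof -
      have "R' = (\<Prod>x\<in>Epq - {e}. (if \<alpha> (rv x) = - \<alpha> x then - 1 else 1) * lin (\<alpha> x))"
        unfolding R'eq using EpqE by (intro prod.cong) (auto simp: lin_rv lin_uminus_fun)
      also have "\<dots> = (- 1) ^ card ((Epq - {e}) \<inter> {x. \<alpha> (rv x) = - \<alpha> x}) * R"
        unfolding R_def by (rule prod_sign) (simp add: finEpq)
      finally show ?thesis unfolding cset c_def by simp
    qed
    have "L dvd QQ * R' - PP * R" using c1 unfolding c2 splitA splitB .
    then have "L dvd (\<Prod>x\<in>Epq - {e}. lin (\<alpha> x)) * ((- 1) ^ c e * QQ - PP)"
      unfolding R'sign R_def by (simp add: algebra_simps)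
    then show ?thesis unfolding L_def
    proof (rule peel[rotated 3])
      show "finite (Epq - {e})" using finEpq by simp
      show "Gcd (range (\<alpha> e)) = 1" by (rule gcd[OF eE'])
      show "\<forall>s\<in>Epq - {e}. indep (\<alpha> e) (\<alpha> s)"
      proof
        fix s assume s: "s \<in> Epq - {e}"
        then have "s \<in> E" "i s = p" using EpqE unfolding Epq_def edges_between_def by auto
        then show "indep (\<alpha> e) (\<alpha> s)" using ind[OF eE'] s ie by auto
      qed
    qed
  qed
  have ev: "lin (\<alpha> e) dvd PP - QQ" if "e \<in> Epq" "even (c e)" for e
  proof -
    have "lin (\<alpha> e) dvd QQ - PP" using main[OF that(1)] that(2) by simp
    then show ?thesis by (metis dvd_minus_iff minus_diff_eq)
  qed
  have od: "lin (\<alpha> e) dvd PP + QQ" if "e \<in> Epq" "odd (c e)" for e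
  proof -
    have "lin (\<alpha> e) dvd - QQ - PP" using main[OF that(1)] that(2) by simp
    moreover have "- QQ - PP = - (PP + QQ)" by simp
    ultimately show ?thesis by (metis dvd_minus_iff)
  qed
  have pd: "(\<Prod>e\<in>{e\<in>Epq. P e}. lin (\<alpha> e)) dvd Y" if "\<And>e. e \<in> Epq \<Longrightarrow> P e \<Longrightarrow> lin (\<alpha> e) dvd Y" for P Y
  proof (rule prod_dvd)
    show "finite {e\<in>Epq. P e}" using finEpq by simp
    show "\<forall>s\<in>{e\<in>Epq. P e}. Gcd (range (\<alpha> s)) = 1" using gcd EpqE by auto
    show "\<forall>s\<in>{e\<in>Epq. P e}. \<forall>s'\<in>{e\<in>Epq. P e}. s \<noteq> s' \<longrightarrow> indep (\<alpha> s) (\<alpha> s')"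
    proof (intro ballI impI)
      fix s s' assume "s \<in> {e\<in>Epq. P e}" "s' \<in> {e\<in>Epq. P e}" "s \<noteq> s'"
      then show "indep (\<alpha> s) (\<alpha> s')" using ind EpqE unfolding Epq_def edges_between_def by auto
    qed
    show "\<forall>s\<in>{e\<in>Epq. P e}. lin (\<alpha> s) dvd Y" using that by auto
  qed
  show ?thesis unfolding Epq_def[symmetric] using pd[of "\<lambda>e. even (c e)", OF ev] pd[of "\<lambda>e. odd (c e)", OF od] by blast
qed


end
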